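(* For all $\alpha,\beta\ge 0$ one has $I(\alpha,\beta)<\sqrt{\pi/2}$, and $\sup_{\alpha,\beta\ge 0}I(\alpha,\beta)=\lim_{t\to+\infty}I(t,0)=\sqrt{\pi/2}$.
   Context: For $\alpha,\beta\ge 0$ define $I(\alpha,\beta)=\exp\left(-\frac{\alpha\beta}{2}\right)\int_{-\alpha}^{\beta}\exp\left(-\frac{\sigma^2}{2}\right)d\sigma$. *)

theory Defs
  imports "HOL-Analysis.Analysis"
begin

definition I :: "real \<Rightarrow> real \<Rightarrow> real" where
  "I \<alpha> \<beta> = exp (-(\<alpha> * \<beta>) / 2) * integral {-\<alpha>..\<beta>} (\<lambda>\<sigma>. exp (-(\<sigma>^2) / 2))"

end

theory Submission
  imports Defs "HOL-Probability.Probability"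
begin

lemma gauss_half: "has_bochner_integral lborel (\<lambda>x. indicator {0..} x *\<^sub>R exp (- x\<^sup>2 / 2)) (sqrt (pi/2))"
proof -
  let ?f = "\<lambda>x::real. indicator {0..} x *\<^sub>R exp (- x\<^sup>2 / 2)"
  have c: "sqrt 2 \<noteq> 0" by simp
  have eq: "?f (0 + sqrt 2 * x) = indicator {0..} x *\<^sub>R exp (- x\<^sup>2)" for x
    by (auto simp: indicator_def power_mult_distrib zero_le_mult_iff)
  have g: "has_bochner_integral lborel (\<lambda>x. indicator {0..} x *\<^sub>R exp (- x\<^sup>2)) (sqrt pi / 2)"
    by (rule gaussian_moment_0)
  have int: "integrable lborel ?f"
    using lborel_integrable_real_affine_iff[OF c, of ?f 0] g eq
    by (simp add: has_bochner_integral_iff)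
  have "(\<integral>x. ?f x \<partial>lborel) = \<bar>sqrt 2\<bar> *\<^sub>R (\<integral>x. ?f (0 + sqrt 2 * x) \<partial>lborel)"
    by (rule lborel_integral_real_affine[OF c])
  also have "\<dots> = sqrt 2 * (sqrt pi / 2)"
    using g eq by (simp add: has_bochner_integral_iff)
  also have "\<dots> = sqrt (pi/2)"
  proof -
    have "sqrt 2 * sqrt 2 = (2::real)" by simp
    then show ?thesis by (simp add: real_sqrt_divide field_simps)
  qed
  finally show ?thesis using int by (simp add: has_bochner_integral_iff)
qed

lemma Phi_lim: "((\<lambda>t. integral {0..t} (\<lambda>x. exp (- x\<^sup>2 / 2))) \<longlongrightarrow> sqrt (pi/2)) at_top"
proof -
  let ?e = "\<lambda>x::real. exp (- x\<^sup>2 / 2)"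
  have si: "set_integrable lborel {0..} ?e"
    using gauss_half unfolding set_integrable_def by (auto simp: has_bochner_integral_iff)
  have val: "set_lebesgue_integral lborel {0..} ?e = sqrt (pi/2)"
    using gauss_half unfolding set_lebesgue_integral_def by (auto simp: has_bochner_integral_iff)
  have "((\<lambda>b. set_lebesgue_integral lborel {0..b} ?e) \<longlongrightarrow> set_lebesgue_integral lborel {0..} ?e) at_top"
    by (rule tendsto_set_lebesgue_integral_at_top[OF _ si]) auto
  moreover have "set_lebesgue_integral lborel {0..b} ?e = integral {0..b} ?e" for b
    by (rule set_borel_integral_eq_integral(2))
       (auto intro!: borel_integrable_atLeastAtMost' continuous_intros)
  ultimately show ?thesis using val by simp
qed

lemma e_int: "(\<lambda>x::real. exp (- x\<^sup>2 / 2)) integrable_on {a..b}"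
  by (intro integrable_continuous_interval continuous_intros) auto

lemma Phi_step:
  fixes t s :: real
  assumes "0 \<le> t" "t \<le> s"
  shows "integral {0..s} (\<lambda>x. exp (- x\<^sup>2 / 2)) = integral {0..t} (\<lambda>x. exp (- x\<^sup>2 / 2)) + integral {t..s} (\<lambda>x. exp (- x\<^sup>2 / 2))"
  using Henstock_Kurzweil_Integration.integral_combine[OF assms e_int] by simp

lemma Phi_mono:
  fixes t s :: real
  assumes "0 \<le> t" "t \<le> s"
  shows "integral {0..t} (\<lambda>x. exp (- x\<^sup>2 / 2)) \<le> integral {0..s} (\<lambda>x. exp (- x\<^sup>2 / 2))"
proof -
  have "0 \<le> integral {t..s} (\<lambda>x. exp (- x\<^sup>2 / 2))"
    by (intro integral_nonneg e_int) auto
  then show ?thesis using Phi_step[OF assms] by simp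
qed

lemma Phi_strict:
  fixes t :: real
  assumes "0 \<le> t"
  shows "integral {0..t} (\<lambda>x. exp (- x\<^sup>2 / 2)) < integral {0..t+1} (\<lambda>x. exp (- x\<^sup>2 / 2))"
proof -
  have "integral {t..t+1} (\<lambda>x. exp (- (t+1)\<^sup>2 / 2)) \<le> integral {t..t+1} (\<lambda>x. exp (- x\<^sup>2 / 2))"
  proof (rule integral_le)
    show "(\<lambda>x. exp (- (t+1)\<^sup>2 / 2)) integrable_on {t..t+1}" by (rule integrable_const_ivl)
    show "(\<lambda>x. exp (- x\<^sup>2 / 2)) integrable_on {t..t+1}" by (rule e_int)
    fix x assume "x \<in> {t..t+1}"
    then have "x\<^sup>2 \<le> (t+1)\<^sup>2" using assms by (intro power_mono) auto
    then show "exp (- (t+1)\<^sup>2 / 2) \<le> exp (- x\<^sup>2 / 2)" by simp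
  qed
  moreover have "integral {t..t+1} (\<lambda>x. exp (- (t+1)\<^sup>2 / 2)) > 0" by simp
  ultimately show ?thesis using Phi_step[of t "t+1"] assms
    by (smt (verit) exp_gt_zero integral_const_real content_real)
qed

lemma Phi_less:
  fixes t :: real
  assumes "0 \<le> t"
  shows "integral {0..t} (\<lambda>x. exp (- x\<^sup>2 / 2)) < sqrt (pi/2)"
proof -
  have "integral {0..t+1} (\<lambda>x. exp (- x\<^sup>2 / 2)) \<le> sqrt (pi/2)"
  proof (rule tendsto_lowerbound[OF Phi_lim])
    show "\<forall>\<^sub>F s in at_top. integral {0..t+1} (\<lambda>x. exp (- x\<^sup>2 / 2)) \<le> integral {0..s} (\<lambda>x. exp (- x\<^sup>2 / 2))"
      using eventually_ge_at_top[of "t+1"] by eventually_elim (rule Phi_mono, use assms in auto)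
  qed simp
  then show ?thesis using Phi_strict[OF assms] by simp
qed

lemma pointwise:
  fixes a b x :: real
  assumes "0 \<le> a" "0 \<le> b"
  shows "exp (- (x\<^sup>2 + a*b) / 2) + exp (- ((b - a - x)\<^sup>2 + a*b) / 2)
       \<le> exp (- (x + a)\<^sup>2 / 2) + exp (- ((b - a - x) + a)\<^sup>2 / 2)"
proof -
  define h where "h = (a+b)/2"
  define c where "c = (b-a)/2"
  define v where "v = x - c"
  define EE where "EE = exp (- (v\<^sup>2 + h\<^sup>2) / 2)"
  have x: "x = c + v" by (simp add: v_def)
  have ab: "a*b = h\<^sup>2 - c\<^sup>2" by (simp add: h_def c_def power2_eq_square field_simps)
  have a: "a = h - c" and b: "b = h + c" by (simp_all add: h_def c_def field_simps)
  have e1: "exp (- (x\<^sup>2 + a*b) / 2) = EE * exp (- (c * v))"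
    unfolding EE_def exp_add[symmetric] by (rule arg_cong[where f=exp]) (simp add: x ab power2_eq_square field_simps)
  have e2: "exp (- ((b - a - x)\<^sup>2 + a*b) / 2) = EE * exp (c * v)"
    unfolding EE_def exp_add[symmetric] by (rule arg_cong[where f=exp]) (simp add: x a b power2_eq_square field_simps)
  have e3: "exp (- (x + a)\<^sup>2 / 2) = EE * exp (- (h * v))"
    unfolding EE_def exp_add[symmetric] by (rule arg_cong[where f=exp]) (simp add: x a power2_eq_square field_simps)
  have e4: "exp (- ((b - a - x) + a)\<^sup>2 / 2) = EE * exp (h * v)"
    unfolding EE_def exp_add[symmetric] by (rule arg_cong[where f=exp]) (simp add: x a b power2_eq_square field_simps)
  have "\<bar>c\<bar> \<le> h" using assms by (simp add: h_def c_def)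
  then have "\<bar>c * v\<bar> \<le> \<bar>h * v\<bar>" by (simp add: abs_mult mult_right_mono)
  then have "cosh (\<bar>c * v\<bar>) \<le> cosh (\<bar>h * v\<bar>)" by (subst cosh_real_nonneg_le_iff) auto
  then have "cosh (c * v) \<le> cosh (h * v)" by (simp only: cosh_real_abs)
  then have "exp (c * v) + exp (- (c * v)) \<le> exp (h * v) + exp (- (h * v))"
    by (simp add: cosh_def)
  moreover have "EE > 0" by (simp add: EE_def)
  ultimately show ?thesis unfolding e1 e2 e3 e4
    by (smt (verit) distrib_left mult_left_mono)
qed

lemma I_le_Phi:
  fixes a b :: real
  assumes "0 \<le> a" "0 \<le> b"
  shows "I a b \<le> integral {0..a+b} (\<lambda>x. exp (- x\<^sup>2 / 2))"
proof -
  let ?e = "\<lambda>x::real. exp (- x\<^sup>2 / 2)"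
  define F where "F = (\<lambda>x::real. exp (- (x\<^sup>2 + a*b) / 2))"
  define G where "G = (\<lambda>x::real. exp (- (x + a)\<^sup>2 / 2))"
  define r where "r = (\<lambda>x::real. b - a - x)"
  have Fc: "continuous_on S F" for S unfolding F_def by (intro continuous_intros) auto
  have Gc: "continuous_on S G" for S unfolding G_def by (intro continuous_intros) auto
  have Fi: "F integrable_on {-a..b}" by (intro integrable_continuous_interval Fc)
  have Gi: "G integrable_on {-a..b}" by (intro integrable_continuous_interval Gc)
  have Fri: "(\<lambda>x. F (r x)) integrable_on {-a..b}" unfolding r_def
    by (intro integrable_continuous_interval continuous_on_compose2[OF Fc] continuous_intros) auto
  have Gri: "(\<lambda>x. G (r x)) integrable_on {-a..b}" unfolding r_def
    by (intro integrable_continuous_interval continuous_on_compose2[OF Gc] continuous_intros) auto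
  have I_eq: "I a b = integral {-a..b} F"
  proof -
    have "I a b = integral {-a..b} (\<lambda>x. exp (-(a*b)/2) * ?e x)"
      unfolding I_def by simp
    also have "\<dots> = integral {-a..b} F"
      unfolding F_def by (rule integral_cong) (simp add: exp_add[symmetric] field_simps)
    finally show ?thesis .
  qed
  have img1: "(\<lambda>x. (1 / (-1::real)) *\<^sub>R x + - ((1 / (-1)) *\<^sub>R (b - a))) ` cbox (-a) b = {-a..b}"
    using image_affinity_atLeastAtMost[of "-1" "b - a" "-a" b] assms by simp
  have "((\<lambda>x. F ((-1) *\<^sub>R x + (b - a))) has_integral (1 / (\<bar>-1\<bar> ^ DIM(real))) *\<^sub>R integral {-a..b} F)
        ((\<lambda>x. (1 / (-1::real)) *\<^sub>R x + - ((1 / (-1)) *\<^sub>R (b - a))) ` cbox (-a) b)"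
    by (rule has_integral_affinity) (use Fi in auto)
  then have "((\<lambda>x. F (r x)) has_integral integral {-a..b} F) {-a..b}"
    unfolding img1 r_def by simp
  then have R1: "integral {-a..b} (\<lambda>x. F (r x)) = integral {-a..b} F" by (rule integral_unique)
  have img2: "(\<lambda>x. (1 / (1::real)) *\<^sub>R x + - ((1 / 1) *\<^sub>R (b - a))) ` cbox (-a) b = {-b..a}"
    using image_affinity_atLeastAtMost[of "1" "-(b - a)" "-a" b] assms by simp
  have img3: "(\<lambda>x. (1 / (1::real)) *\<^sub>R x + - ((1 / 1) *\<^sub>R a)) ` cbox 0 (a+b) = {-a..b}"
    using image_affinity_atLeastAtMost[of "1" "-a" 0 "a+b"] assms by simp
  have "(?e has_integral integral {0..a+b} ?e) (cbox 0 (a+b))"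
    using e_int by (simp add: integrable_integral)
  then have "((\<lambda>x. ?e (1 *\<^sub>R x + a)) has_integral (1 / (\<bar>1\<bar> ^ DIM(real))) *\<^sub>R integral {0..a+b} ?e)
        ((\<lambda>x. (1 / (1::real)) *\<^sub>R x + - ((1 / 1) *\<^sub>R a)) ` cbox 0 (a+b))"
    by (rule has_integral_affinity) auto
  then have "(G has_integral integral {0..a+b} ?e) {-a..b}"
    unfolding img3 G_def by (simp add: add.commute)
  then have G_eq: "integral {-a..b} G = integral {0..a+b} ?e" by (rule integral_unique)
  have "((\<lambda>x. G ((-1) *\<^sub>R x + (b - a))) has_integral (1 / (\<bar>-1\<bar> ^ DIM(real))) *\<^sub>R integral {-a..b} G)
        ((\<lambda>x. (1 / (-1::real)) *\<^sub>R x + - ((1 / (-1)) *\<^sub>R (b - a))) ` cbox (-a) b)"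
    by (rule has_integral_affinity) (use Gi in auto)
  then have "((\<lambda>x. G (r x)) has_integral integral {-a..b} G) {-a..b}"
    unfolding img1 r_def by simp
  then have R2: "integral {-a..b} (\<lambda>x. G (r x)) = integral {-a..b} G" by (rule integral_unique)
  have "integral {-a..b} (\<lambda>x. F x + F (r x)) \<le> integral {-a..b} (\<lambda>x. G x + G (r x))"
  proof (rule integral_le)
    show "(\<lambda>x. F x + F (r x)) integrable_on {-a..b}" by (intro integrable_add Fi Fri)
    show "(\<lambda>x. G x + G (r x)) integrable_on {-a..b}" by (intro integrable_add Gi Gri)
    fix x show "F x + F (r x) \<le> G x + G (r x)"
      unfolding F_def G_def r_def by (rule pointwise[OF assms])
  qed
  then have "integral {-a..b} F + integral {-a..b} (\<lambda>x. F (r x)) \<le> integral {-a..b} G + integral {-a..b} (\<lambda>x. G (r x))"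
    by (simp add: integral_add Fi Gi Fri Gri)
  then show ?thesis using R1 R2 I_eq G_eq by simp
qed

lemma I_t0: "0 \<le> t \<Longrightarrow> I t 0 = integral {0..t} (\<lambda>x. exp (- x\<^sup>2 / 2))"
  unfolding I_def
  using Henstock_Kurzweil_Integration.integral_reflect_real[where a=0 and b=t and f="\<lambda>x::real. exp (- x\<^sup>2 / 2)"] by simp

theorem mainTheorem6:
  shows "(\<forall>\<alpha> \<beta>. \<alpha> \<ge> 0 \<longrightarrow> \<beta> \<ge> 0 \<longrightarrow> I \<alpha> \<beta> < sqrt (pi / 2))
    \<and> (SUP p\<in>{p::real\<times>real. fst p \<ge> 0 \<and> snd p \<ge> 0}. I (fst p) (snd p)) = sqrt (pi / 2)
    \<and> ((\<lambda>t. I t 0) \<longlongrightarrow> sqrt (pi / 2)) at_top"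
proof (intro conjI)
  show bnd: "\<forall>\<alpha> \<beta>. \<alpha> \<ge> 0 \<longrightarrow> \<beta> \<ge> 0 \<longrightarrow> I \<alpha> \<beta> < sqrt (pi / 2)"
    using I_le_Phi Phi_less by (smt (verit))
  show lim: "((\<lambda>t. I t 0) \<longlongrightarrow> sqrt (pi / 2)) at_top"
  proof (rule Lim_transform_eventually[OF Phi_lim])
    show "\<forall>\<^sub>F t in at_top. integral {0..t} (\<lambda>x. exp (- x\<^sup>2 / 2)) = I t 0"
      using eventually_ge_at_top[of "0::real"] by eventually_elim (simp add: I_t0)
  qed
  let ?S = "{p::real\<times>real. fst p \<ge> 0 \<and> snd p \<ge> 0}"
  let ?f = "\<lambda>p. I (fst p) (snd p)"
  have ne: "?S \<noteq> {}" by (auto intro!: exI[of _ "(0,0)"])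
  have le: "?f p \<le> sqrt (pi/2)" if "p \<in> ?S" for p using bnd that by (auto intro: less_imp_le)
  have bdd: "bdd_above (?f ` ?S)" using le by (auto intro!: bdd_aboveI)
  show "(SUP p\<in>?S. ?f p) = sqrt (pi / 2)"
  proof (rule antisym)
    show "(SUP p\<in>?S. ?f p) \<le> sqrt (pi / 2)" using ne le by (rule cSUP_least)
    show "sqrt (pi / 2) \<le> (SUP p\<in>?S. ?f p)"
    proof (rule tendsto_le[OF trivial_limit_at_top_linorder tendsto_const lim])
      show "\<forall>\<^sub>F t in at_top. I t 0 \<le> (SUP p\<in>?S. ?f p)"
        using eventually_ge_at_top[of "0::real"]
      proof eventually_elim
        case (elim t)
        then have "(t,0) \<in> ?S" by simp
        from cSUP_upper[OF this bdd] show ?case by simp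
      qed
    qed
  qed
qed

end
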